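(* Let $n\ge1$ and let $C$ be the $n\times n$ matrix with entries in $OPol_n$ whose $(i,i-1)$-entry is $1$ for $2\le i\le n$, whose $(i,n)$-entry is $(-1)^{n-i}e^{(n)}_{n+1-i}$ for $1\le i\le n$, and all other entries $0$ (the non-commutative companion matrix of $(t-x_1)\cdots(t-x_n)$). Then for all $1\le i,j\le n$ and $k\ge0$, the $(i,j)$-entry of $C^k$ (matrix multiplication in the given order in the non-commutative ring $OPol_n$) equals $$c_{i,j;k}:=\sum_{t=0}^{\min(k+j-i,\,n-i)}(-1)^te^{(n)}_th^{(n)}_{k+j-i-t},$$ which is $0$ if $k<i-j$ and $1$ if $k=i-j$.
   Context: $\Bbbk$ is a field of characteristic $\neq2$. $OPol_n$ is the graded superalgebra generated by odd degree-2 elements $x_1,\dots,x_n$ with $x_jx_i=-x_ix_j$ ($i\ne j$). $e_r^{(n)}:=\sum_{1\le i_1<\cdots<i_r\le n}x_{i_1}\cdots x_{i_r}$ and $h_r^{(n)}:=\sum_{n\ge i_r\ge\cdots\ge i_1\ge1}x_{i_r}\cdots x_{i_1}$ for $r\ge0$, with $e_0^{(n)}=h_0^{(n)}=1$, and $h^{(n)}_r:=0$ for $r<0$. *)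

theory Defs
  imports Main
begin

text \<open>Concrete model of OPol_n: an element is a coefficient function on exponent
vectors a :: nat => nat, standing for the linear combination of ordered monomials
x_1^(a 1) x_2^(a 2) ... x_n^(a n).  Multiplication of ordered monomials uses the
relations x_j x_i = - x_i x_j (i ~= j): moving the letters of the right factor
past the larger-index letters of the left factor gives the sign
(-1)^(sum over i > j of a i * b j).\<close>

type_synonym 'k opol = "(nat \<Rightarrow> nat) \<Rightarrow> 'k"

definition ozero :: "'k::field opol" where
  "ozero = (\<lambda>_. 0)"

definition oone :: "'k::field opol" where
  "oone = (\<lambda>a. if a = (\<lambda>_. 0) then 1 else 0)"

definition ogen :: "nat \<Rightarrow> 'k::field opol" where
  "ogen i = (\<lambda>a. if a = (\<lambda>l. if l = i then 1 else 0) then 1 else 0)"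

definition oadd :: "'k::field opol \<Rightarrow> 'k opol \<Rightarrow> 'k opol" where
  "oadd f g = (\<lambda>a. f a + g a)"

definition oscale :: "'k::field \<Rightarrow> 'k opol \<Rightarrow> 'k opol" where
  "oscale c f = (\<lambda>a. c * f a)"

definition osum :: "('b \<Rightarrow> 'k::field opol) \<Rightarrow> 'b set \<Rightarrow> 'k opol" where
  "osum F A = (\<lambda>a. \<Sum>x\<in>A. F x a)"

definition osign :: "nat \<Rightarrow> (nat \<Rightarrow> nat) \<Rightarrow> (nat \<Rightarrow> nat) \<Rightarrow> 'k::field" where
  "osign n a b = (-1) ^ (\<Sum>i\<in>{1..n}. \<Sum>j\<in>{1..<i}. a i * b j)"

definition omul :: "nat \<Rightarrow> 'k::field opol \<Rightarrow> 'k opol \<Rightarrow> 'k opol" where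
  "omul n f g = (\<lambda>c. \<Sum>p\<in>{(a, b). \<forall>l. a l + b l = c l}.
      osign n (fst p) (snd p) * f (fst p) * g (snd p))"

definition oprod :: "nat \<Rightarrow> nat list \<Rightarrow> 'k::field opol" where
  "oprod n xs = foldr (\<lambda>i acc. omul n (ogen i) acc) xs oone"

definition oe :: "nat \<Rightarrow> nat \<Rightarrow> 'k::field opol" where
  "oe n r = osum (\<lambda>S. oprod n (sorted_list_of_set S)) {S. S \<subseteq> {1..n} \<and> card S = r}"

definition oh :: "nat \<Rightarrow> int \<Rightarrow> 'k::field opol" where
  "oh n r = (if r < 0 then ozero else
     osum (\<lambda>xs. oprod n (rev xs))
       {xs. length xs = nat r \<and> sorted xs \<and> set xs \<subseteq> {1..n}})"

type_synonym 'k omat = "nat \<Rightarrow> nat \<Rightarrow> 'k opol"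

definition omatmul :: "nat \<Rightarrow> 'k::field omat \<Rightarrow> 'k omat \<Rightarrow> 'k omat" where
  "omatmul n A B = (\<lambda>i j. osum (\<lambda>l. omul n (A i l) (B l j)) {1..n})"

definition omatid :: "'k::field omat" where
  "omatid = (\<lambda>i j. if i = j then oone else ozero)"

primrec omatpow :: "nat \<Rightarrow> 'k::field omat \<Rightarrow> nat \<Rightarrow> 'k omat" where
  "omatpow n A 0 = omatid"
| "omatpow n A (Suc k) = omatmul n (omatpow n A k) A"

definition ocomp :: "nat \<Rightarrow> 'k::field omat" where
  "ocomp n = (\<lambda>i j. if j = n then oscale ((-1) ^ (n - i)) (oe n (n + 1 - i))
                    else if 2 \<le> i \<and> j = i - 1 then oone else ozero)"

definition oc :: "nat \<Rightarrow> nat \<Rightarrow> nat \<Rightarrow> nat \<Rightarrow> 'k::field opol" where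
  "oc n i j k = osum (\<lambda>t. oscale ((-1) ^ nat t) (omul n (oe n (nat t)) (oh n (int k + int j - int i - t))))
      {0 .. min (int k + int j - int i) (int n - int i)}"

end

theory Submission
  imports Defs "HOL-Library.Function_Algebras"
begin

lemma sum_fun_app: "(sum F A :: 'a \<Rightarrow> 'b::comm_monoid_add) x = (\<Sum>a\<in>A. F a x)"
  by (induction A rule: infinite_finite_induct) auto

lemma osum_eq: "osum F A = sum F A"
  by (auto simp: osum_def sum_fun_app)

lemma ozero_eq: "ozero = 0" by (auto simp: ozero_def)

definition omono :: "(nat \<Rightarrow> nat) \<Rightarrow> 'k::field \<Rightarrow> 'k opol" where
  "omono a x = (\<lambda>c. if c = a then x else 0)"

definition fs :: "(nat \<Rightarrow> nat) \<Rightarrow> bool" where "fs a \<longleftrightarrow> finite {l. a l \<noteq> 0}"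

definition PP :: "(nat \<Rightarrow> nat) \<Rightarrow> ((nat \<Rightarrow> nat) \<times> (nat \<Rightarrow> nat)) set" where
  "PP c = {(a, b). \<forall>l. a l + b l = c l}"

lemma omul_PP: "omul n f g c = (\<Sum>p\<in>PP c. osign n (fst p) (snd p) * f (fst p) * g (snd p))"
  by (simp add: omul_def PP_def)

lemma PP_finite: assumes "fs c" shows "finite (PP c)"
proof -
  let ?S = "{l. c l \<noteq> 0}"
  let ?F = "{f. \<forall>x. (x \<in> ?S \<longrightarrow> f x \<in> {0..Max (c ` ?S)}) \<and> (x \<notin> ?S \<longrightarrow> f x = (0::nat))}"
  have fin: "finite ?F" using assms by (intro finite_set_of_finite_funs) (auto simp: fs_def)
  have "PP c \<subseteq> (\<lambda>a. (a, \<lambda>l. c l - a l)) ` ?F"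
  proof
    fix p assume p: "p \<in> PP c"
    obtain a b where ab: "p = (a,b)" by force
    have h: "\<forall>l. a l + b l = c l" using p ab by (auto simp: PP_def)
    have "a \<in> ?F"
    proof -
      have "\<And>x. c x \<noteq> 0 \<Longrightarrow> a x \<le> Max (c ` ?S)"
      proof -
        fix x assume "c x \<noteq> 0"
        have "a x \<le> c x" using h by (metis le_add1)
        also have "c x \<le> Max (c ` ?S)" using assms \<open>c x \<noteq> 0\<close> by (intro Max_ge) (auto simp: fs_def)
        finally show "a x \<le> Max (c ` ?S)" .
      qed
      moreover have "\<And>x. c x = 0 \<Longrightarrow> a x = 0" using h by (metis add_is_0)
      ultimately show ?thesis by auto
    qed
    moreover have "b = (\<lambda>l. c l - a l)" using h by (metis add_diff_cancel_left')
    ultimately show "p \<in> (\<lambda>a. (a, \<lambda>l. c l - a l)) ` ?F" using ab by auto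
  qed
  thus ?thesis using fin finite_subset by blast
qed

lemma PP_infinite: assumes "\<not> fs c" shows "infinite (PP c)"
proof
  assume fin: "finite (PP c)"
  let ?S = "{l. c l \<noteq> 0}"
  let ?g = "\<lambda>l. (\<lambda>m. if m = l then c l else 0, \<lambda>m. if m = l then 0 else c m)"
  have "inj_on ?g ?S"
  proof (rule inj_onI)
    fix x y assume "x \<in> ?S" "y \<in> ?S" "?g x = ?g y"
    then have "fst (?g x) x = fst (?g y) x" by simp
    then have "c x = (if x = y then c y else 0)" by simp
    with \<open>x \<in> ?S\<close> show "x = y" by (cases "x = y") auto
  qed
  moreover have "?g ` ?S \<subseteq> PP c" by (auto simp: PP_def)
  ultimately have "finite (?g ` ?S)" using fin finite_subset by blast
  with \<open>inj_on ?g ?S\<close> have "finite ?S" using finite_imageD by blast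
  with assms show False by (simp add: fs_def)
qed

definition ofin :: "'k::field opol \<Rightarrow> bool" where
  "ofin f \<longleftrightarrow> (\<forall>c. \<not> fs c \<longrightarrow> f c = 0)"

lemma ofin_omul: "ofin (omul n f g)"
  using PP_infinite by (auto simp: ofin_def omul_PP)

lemma ofin_sum: "(\<And>x. x \<in> A \<Longrightarrow> ofin (F x)) \<Longrightarrow> ofin (sum F A)"
  by (auto simp: ofin_def sum_fun_app)

lemma ofin_oscale: "ofin f \<Longrightarrow> ofin (oscale c f)"
  by (auto simp: ofin_def oscale_def)

lemma osign_add_left: "osign n (\<lambda>l. a l + b l) c = osign n a c * osign n b c"
  by (simp add: osign_def distrib_right sum.distrib power_add)

lemma osign_add_right: "osign n a (\<lambda>l. b l + c l) = osign n a b * osign n a c"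
  by (simp add: osign_def distrib_left sum.distrib power_add)

lemma osign_zero_left: "osign n (\<lambda>_. 0) b = 1" by (simp add: osign_def)
lemma osign_zero_right: "osign n a (\<lambda>_. 0) = 1" by (simp add: osign_def)

lemma fs_add: "fs a \<Longrightarrow> fs b \<Longrightarrow> fs (\<lambda>l. a l + b l)"
proof -
  assume "fs a" "fs b"
  have "{l. a l + b l \<noteq> 0} \<subseteq> {l. a l \<noteq> 0} \<union> {l. b l \<noteq> 0}" by auto
  thus ?thesis using \<open>fs a\<close> \<open>fs b\<close> by (auto simp: fs_def intro: finite_subset)
qed

lemma omul_mono: assumes "fs a" "fs b"
  shows "omul n (omono a x) (omono b y) = omono (\<lambda>l. a l + b l) (osign n a b * x * y)"
proof
  fix c
  show "omul n (omono a x) (omono b y) c = omono (\<lambda>l. a l + b l) (osign n a b * x * y) c"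
  proof (cases "c = (\<lambda>l. a l + b l)")
    case True
    have fin: "finite (PP c)" using True fs_add[OF assms] PP_finite by simp
    have mem: "(a,b) \<in> PP c" using True by (auto simp: PP_def)
    have "omul n (omono a x) (omono b y) c = (\<Sum>p\<in>PP c. if p = (a,b) then osign n a b * x * y else 0)"
      unfolding omul_PP by (rule sum.cong) (auto simp: omono_def)
    also have "\<dots> = osign n a b * x * y" using fin mem by simp
    finally show ?thesis using True by (simp add: omono_def)
  next
    case False
    have "omul n (omono a x) (omono b y) c = (\<Sum>p\<in>PP c. 0)"
      unfolding omul_PP by (rule sum.cong) (use False in \<open>auto simp: omono_def PP_def\<close>)
    then show ?thesis using False by (simp add: omono_def)
  qed
qed

definition cnt :: "nat list \<Rightarrow> nat \<Rightarrow> nat" where "cnt w = (\<lambda>l. count_list w l)"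

lemma fs_cnt: "fs (cnt w)"
proof -
  have "{l. cnt w l \<noteq> 0} \<subseteq> set w" by (auto simp: cnt_def count_list_0_iff)
  thus ?thesis by (auto simp: fs_def intro: finite_subset)
qed

lemma oone_mono: "oone = omono (\<lambda>_. 0) 1" by (simp add: oone_def omono_def)
lemma ogen_mono: "ogen i = omono (cnt [i]) 1"
proof -
  have "cnt [i] = (\<lambda>l. if l = i then 1 else 0)" by (auto simp: cnt_def)
  thus ?thesis by (simp add: ogen_def omono_def)
qed

lemma oprod_Nil: "oprod n [] = oone" by (simp add: oprod_def)
lemma oprod_Cons: "oprod n (i # w) = omul n (ogen i) (oprod n w)" by (simp add: oprod_def)

lemma cnt_Cons: "cnt (i # w) = (\<lambda>l. cnt [i] l + cnt w l)" by (auto simp: cnt_def)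
lemma cnt_append: "cnt (u @ w) = (\<lambda>l. cnt u l + cnt w l)" by (auto simp: cnt_def)

lemma oprod_mono: "\<exists>x::'k::field. oprod n w = omono (cnt w) x"
proof (induction w)
  case Nil
  have "cnt [] = (\<lambda>_. 0)" by (auto simp: cnt_def)
  then have "oprod n [] = omono (cnt []) (1::'k)" by (simp add: oprod_Nil oone_mono)
  then show ?case by blast
next
  case (Cons i w)
  then obtain x :: 'k where x: "oprod n w = omono (cnt w) x" by blast
  show ?case unfolding oprod_Cons x ogen_mono
    by (subst omul_mono) (auto simp: fs_cnt cnt_Cons[symmetric])
qed

lemma mono_assoc: assumes "fs a" "fs b" "fs c"
  shows "omul n (omul n (omono a x) (omono b y)) (omono c z) = omul n (omono a x) (omul n (omono b y) (omono c z))"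
  using assms by (simp add: omul_mono fs_add osign_add_left osign_add_right add.assoc mult_ac)

lemma omul_sum_left: "omul n (sum F A) g = (\<Sum>x\<in>A. omul n (F x) g)"
  by (rule ext) (simp add: omul_PP sum_fun_app sum_distrib_left sum_distrib_right sum.swap[of _ A] mult_ac)

lemma omul_sum_right: "omul n f (sum G A) = (\<Sum>x\<in>A. omul n f (G x))"
  by (rule ext) (simp add: omul_PP sum_fun_app sum_distrib_left sum_distrib_right sum.swap[of _ A] mult_ac)

lemma omul_zero_left: "omul n 0 g = 0" by (rule ext) (simp add: omul_PP)
lemma omul_zero_right: "omul n f 0 = 0" by (rule ext) (simp add: omul_PP)

lemma omul_scale_left: "omul n (oscale c f) g = oscale c (omul n f g)"
  by (rule ext) (simp add: omul_PP oscale_def sum_distrib_left mult_ac)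
lemma omul_scale_right: "omul n f (oscale c g) = oscale c (omul n f g)"
  by (rule ext) (simp add: omul_PP oscale_def sum_distrib_left mult_ac)

lemma oscale_sum: "oscale c (sum F A) = (\<Sum>x\<in>A. oscale c (F x))"
  by (rule ext) (simp add: oscale_def sum_fun_app sum_distrib_left)
lemma oscale_oscale: "oscale c (oscale d f) = oscale (c * d) f"
  by (simp add: oscale_def mult_ac)
lemma oscale_one: "oscale 1 f = f" by (simp add: oscale_def)
lemma oscale_zero: "oscale c 0 = 0" by (simp add: oscale_def zero_fun_def)

lemma omul_oone_right: assumes "ofin f" shows "omul n f oone = f"
proof
  fix c
  show "omul n f oone c = f c"
  proof (cases "fs c")
    case True
    have fin: "finite (PP c)" using True PP_finite by simp
    have mem: "(c, \<lambda>_. 0) \<in> PP c" by (auto simp: PP_def)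
    have "omul n f oone c = (\<Sum>p\<in>PP c. if p = (c, \<lambda>_. 0) then f c else 0)"
      unfolding omul_PP
    proof (rule sum.cong)
      fix p assume "p \<in> PP c"
      then obtain a b where p: "p = (a,b)" "\<forall>l. a l + b l = c l" by (auto simp: PP_def)
      show "osign n (fst p) (snd p) * f (fst p) * oone (snd p) = (if p = (c, \<lambda>_. 0) then f c else 0)"
      proof (cases "b = (\<lambda>_. 0)")
        case True
        then have "a = c" using p by auto
        then show ?thesis using p True by (simp add: oone_def osign_zero_right)
      qed (use p in \<open>auto simp: oone_def\<close>)
    qed simp
    also have "\<dots> = f c" using fin mem by simp
    finally show ?thesis .
  next
    case False
    then show ?thesis using assms ofin_omul[of n f oone] by (simp add: ofin_def)
  qed
qed

lemma omul_oone_left: assumes "ofin f" shows "omul n oone f = f"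
proof
  fix c
  show "omul n oone f c = f c"
  proof (cases "fs c")
    case True
    have fin: "finite (PP c)" using True PP_finite by simp
    have mem: "(\<lambda>_. 0, c) \<in> PP c" by (auto simp: PP_def)
    have "omul n oone f c = (\<Sum>p\<in>PP c. if p = (\<lambda>_. 0, c) then f c else 0)"
      unfolding omul_PP
    proof (rule sum.cong)
      fix p assume "p \<in> PP c"
      then obtain a b where p: "p = (a,b)" "\<forall>l. a l + b l = c l" by (auto simp: PP_def)
      show "osign n (fst p) (snd p) * oone (fst p) * f (snd p) = (if p = (\<lambda>_. 0, c) then f c else 0)"
      proof (cases "a = (\<lambda>_. 0)")
        case True
        then have "b = c" using p by auto
        then show ?thesis using p True by (simp add: oone_def osign_zero_left)
      qed (use p in \<open>auto simp: oone_def\<close>)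
    qed simp
    also have "\<dots> = f c" using fin mem by simp
    finally show ?thesis .
  next
    case False
    then show ?thesis using assms ofin_omul[of n oone f] by (simp add: ofin_def)
  qed
qed

lemma ofin_oprod: "ofin (oprod n w)"
proof (cases w)
  case Nil
  then show ?thesis by (auto simp: oprod_Nil oone_def ofin_def fs_def)
next
  case (Cons a list)
  then show ?thesis by (simp add: oprod_Cons ofin_omul)
qed

lemma oprod_concat: "omul n (oprod n u) (oprod n v) = (oprod n (u @ v) :: 'a::field opol)"
proof (induction u)
  case Nil
  show ?case by (simp add: oprod_Nil omul_oone_left ofin_oprod)
next
  case (Cons i u)
  obtain x :: 'a where x: "oprod n u = omono (cnt u) x" using oprod_mono by blast
  obtain y :: 'a where y: "oprod n v = omono (cnt v) y" using oprod_mono by blast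
  have "omul n (oprod n (i # u)) (oprod n v) = (omul n (ogen i) (omul n (oprod n u) (oprod n v)) :: 'a opol)"
    unfolding oprod_Cons x y ogen_mono by (rule mono_assoc) (auto simp: fs_cnt)
  then show ?case using Cons by (simp add: oprod_Cons)
qed

definition SL :: "nat \<Rightarrow> nat \<Rightarrow> nat list set" where
  "SL n r = {ys. sorted_wrt (<) ys \<and> set ys \<subseteq> {1..n} \<and> length ys = r}"
definition WL :: "nat \<Rightarrow> nat \<Rightarrow> nat list set" where
  "WL n m = {xs. sorted xs \<and> set xs \<subseteq> {1..n} \<and> length xs = m}"

lemma finite_SL: "finite (SL n r)"
proof -
  have "SL n r \<subseteq> {xs. set xs \<subseteq> {1..n} \<and> length xs \<le> r}" by (auto simp: SL_def)
  thus ?thesis using finite_lists_length_le[of "{1..n}" r] finite_subset by blast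
qed

lemma finite_WL: "finite (WL n r)"
proof -
  have "WL n r \<subseteq> {xs. set xs \<subseteq> {1..n} \<and> length xs \<le> r}" by (auto simp: WL_def)
  thus ?thesis using finite_lists_length_le[of "{1..n}" r] finite_subset by blast
qed

lemma oe_SL: "oe n r = (sum (oprod n) (SL n r) :: 'k::field opol)"
proof -
  let ?A = "{S. S \<subseteq> {1..n} \<and> card S = r}"
  have inj: "inj_on sorted_list_of_set ?A"
    by (rule inj_onI) (metis finite_atLeastAtMost finite_subset mem_Collect_eq sorted_list_of_set_inject)
  have img: "sorted_list_of_set ` ?A = SL n r"
  proof
    show "sorted_list_of_set ` ?A \<subseteq> SL n r"
    proof
      fix ys assume "ys \<in> sorted_list_of_set ` ?A"
      then obtain S where S: "S \<subseteq> {1..n}" "card S = r" "ys = sorted_list_of_set S" by auto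
      then have "finite S" using finite_subset by blast
      then show "ys \<in> SL n r" using S by (auto simp: SL_def)
    qed
    show "SL n r \<subseteq> sorted_list_of_set ` ?A"
    proof
      fix ys assume ys: "ys \<in> SL n r"
      then have d: "distinct ys" "sorted_wrt (<) ys" by (auto simp: SL_def strict_sorted_iff)
      have "sorted_list_of_set (set ys) = ys"
        using d by (simp add: sorted_list_of_set_unique[symmetric] distinct_card)
      moreover have "set ys \<in> ?A" using ys d by (auto simp: SL_def distinct_card)
      ultimately show "ys \<in> sorted_list_of_set ` ?A" by (metis image_eqI)
    qed
  qed
  have "oe n r = (sum (\<lambda>S. oprod n (sorted_list_of_set S)) ?A :: 'k opol)" by (simp add: oe_def osum_eq)
  also have "\<dots> = sum (oprod n) (sorted_list_of_set ` ?A)" using sum.reindex[OF inj, of "oprod n :: nat list \<Rightarrow> 'k opol"] by (simp add: comp_def)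
  finally show ?thesis using img by simp
qed

lemma oh_WL: "oh n (int m) = sum (\<lambda>xs. oprod n (rev xs)) (WL n m)"
  by (simp add: oh_def osum_eq WL_def conj_ac)

lemma oh_neg: "s < 0 \<Longrightarrow> oh n s = 0"
  by (simp add: oh_def ozero_eq)

lemma oe_big: "r > n \<Longrightarrow> oe n r = 0"
proof -
  assume "r > n"
  have "{S. S \<subseteq> {1..n} \<and> card S = r} = {}"
  proof (rule ccontr)
    assume "{S. S \<subseteq> {1..n} \<and> card S = r} \<noteq> {}"
    then obtain S where "S \<subseteq> {1..n}" "card S = r" by auto
    then have "r \<le> n" using card_mono[of "{1..n}" S] by auto
    with \<open>r > n\<close> show False by simp
  qed
  then show ?thesis by (simp add: oe_def osum_eq del: Collect_empty_eq)
qed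

lemma oe_0: "oe n 0 = oone"
proof -
  have "SL n 0 = {[]}" by (auto simp: SL_def)
  then show ?thesis by (simp add: oe_SL oprod_Nil)
qed

lemma oh_0: "oh n 0 = oone"
proof -
  have "WL n 0 = {[]}" by (auto simp: WL_def)
  then show ?thesis using oh_WL[of n 0] by (simp add: oprod_Nil)
qed

lemma ofin_oe: "ofin (oe n r)" by (simp add: oe_SL ofin_sum ofin_oprod)
lemma ofin_oh: "ofin (oh n s :: 'k::field opol)"
proof (cases "s < 0")
  case True
  then show ?thesis by (simp add: oh_neg ofin_def)
next
  case False
  then have "s = int (nat s)" by simp
  then have "oh n s = (sum (\<lambda>xs. oprod n (rev xs)) (WL n (nat s)) :: 'k opol)" by (metis oh_WL)
  then show ?thesis by (simp add: ofin_sum ofin_oprod)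
qed

lemma cancel_inv:
  fixes g :: "'b \<Rightarrow> 'k::field opol"
  assumes two: "(2::'k) \<noteq> 0" and fin: "finite S"
    and maps: "\<And>x. x \<in> S \<Longrightarrow> \<iota> x \<in> S"
    and inv: "\<And>x. x \<in> S \<Longrightarrow> \<iota> (\<iota> x) = x"
    and neg: "\<And>x. x \<in> S \<Longrightarrow> g (\<iota> x) = - g x"
  shows "sum g S = 0"
proof -
  have bij: "bij_betw \<iota> S S"
    by (rule bij_betw_byWitness[where f'=\<iota>]) (use maps inv in auto)
  have "sum g S = sum (g \<circ> \<iota>) S" using sum.reindex_bij_betw[OF bij, of g] by simp
  also have "\<dots> = sum (\<lambda>x. - g x) S" by (rule sum.cong) (auto simp: neg)
  also have "\<dots> = - sum g S" by (simp add: sum_negf)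
  finally have e: "sum g S = - sum g S" .
  show ?thesis
  proof
    fix c
    from e have "sum g S c = - sum g S c" by (metis uminus_apply)
    then have "2 * sum g S c = 0" by simp
    with two show "sum g S c = 0 c" by simp
  qed
qed

lemma oscale_neg: "oscale (- c) f = - oscale c f"
  by (rule ext) (simp add: oscale_def)

definition iota2 :: "nat \<times> nat list \<times> nat list \<Rightarrow> nat \<times> nat list \<times> nat list" where
  "iota2 x = (case x of (r, xs, ys) \<Rightarrow>
     if ys \<noteq> [] \<and> (xs = [] \<or> hd ys \<le> hd xs) then (r - 1, hd ys # xs, tl ys)
     else (r + 1, tl xs, hd xs # ys))"

definition S2 :: "nat \<Rightarrow> nat \<Rightarrow> (nat \<times> nat list \<times> nat list) set" where
  "S2 n q = Sigma {0..q} (\<lambda>r. WL n (q - r) \<times> SL n r)"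

lemma S2_mem: "(r, xs, ys) \<in> S2 n q \<longleftrightarrow> r \<le> q \<and> sorted xs \<and> set xs \<subseteq> {1..n} \<and> length xs = q - r
   \<and> sorted_wrt (<) ys \<and> set ys \<subseteq> {1..n} \<and> length ys = r"
  by (auto simp: S2_def WL_def SL_def)

lemma iota2_props:
  assumes q: "q \<ge> 1" and m: "(r, xs, ys) \<in> S2 n q"
  shows "iota2 (r, xs, ys) \<in> S2 n q \<and> iota2 (iota2 (r, xs, ys)) = (r, xs, ys)
     \<and> (case iota2 (r, xs, ys) of (r', xs', ys') \<Rightarrow> rev xs' @ ys' = rev xs @ ys \<and> (r' = r + 1 \<or> r' + 1 = r))"
proof (cases "ys \<noteq> [] \<and> (xs = [] \<or> hd ys \<le> hd xs)")
  case True
  then obtain y ys' where ys: "ys = y # ys'" by (cases ys) auto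
  have A: "iota2 (r, xs, ys) = (r - 1, y # xs, ys')" using True ys by (simp add: iota2_def)
  have mem: "(r - 1, y # xs, ys') \<in> S2 n q"
  proof -
    have "\<forall>z\<in>set xs. y \<le> z"
    proof (cases xs)
      case (Cons x xs'')
      then have "y \<le> x" using True ys by simp
      moreover have "sorted xs" using m by (simp add: S2_mem)
      ultimately show ?thesis using Cons by auto
    qed simp
    then show ?thesis using m ys by (auto simp: S2_mem)
  qed
  have notA: "\<not> (ys' \<noteq> [] \<and> (y # xs = [] \<or> hd ys' \<le> hd (y # xs)))"
  proof
    assume h: "ys' \<noteq> [] \<and> (y # xs = [] \<or> hd ys' \<le> hd (y # xs))"
    have "sorted_wrt (<) (y # ys')" using m ys by (simp add: S2_mem)
    then have "y < hd ys'" using h by (cases ys') auto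
    with h show False by simp
  qed
  have r1: "r \<ge> 1" using m ys by (simp add: S2_mem)
  have B: "iota2 (r - 1, y # xs, ys') = (r, xs, ys)"
    using r1 notA ys by (simp add: iota2_def)
  show ?thesis using A B mem ys r1 by auto
next
  case False
  have xsne: "xs \<noteq> []"
  proof
    assume "xs = []"
    then have "ys = []" using False by simp
    then show False using m q \<open>xs = []\<close> by (simp add: S2_mem)
  qed
  then obtain x xs' where xs: "xs = x # xs'" by (cases xs) auto
  have A: "iota2 (r, xs, ys) = (r + 1, xs', x # ys)" using False xs by (simp add: iota2_def)
  have lt: "ys = [] \<or> x < hd ys" using False xs by auto
  have mem: "(r + 1, xs', x # ys) \<in> S2 n q"
  proof -
    have "\<forall>z\<in>set ys. x < z"
    proof (cases ys)
      case (Cons y ys'')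
      then have "x < y" using lt by simp
      moreover have "sorted_wrt (<) ys" using m by (simp add: S2_mem)
      ultimately show ?thesis using Cons by auto
    qed simp
    then show ?thesis using m xs by (auto simp: S2_mem)
  qed
  have B: "iota2 (r + 1, xs', x # ys) = (r, xs, ys)"
  proof -
    have "sorted (x # xs')" using m xs by (simp add: S2_mem)
    then have "xs' = [] \<or> x \<le> hd xs'" by (cases xs') auto
    then show ?thesis using xs by (simp add: iota2_def)
  qed
  show ?thesis using A B mem xs by auto
qed

lemma finite_S2: "finite (S2 n q)"
  by (simp add: S2_def finite_SL finite_WL)

lemma ident2:
  assumes two: "(2::'k::field) \<noteq> 0" and q: "q \<ge> 1"
  shows "(\<Sum>r\<in>{0..q}. oscale ((-1) ^ r) (omul n (oh n (int q - int r)) (oe n r))) = (0 :: 'k opol)"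
proof -
  let ?g = "\<lambda>x. case x of (r, xs, ys) \<Rightarrow> oscale ((-1) ^ r) (oprod n (rev xs @ ys) :: 'k opol)"
  have "(\<Sum>r\<in>{0..q}. oscale ((-1) ^ r) (omul n (oh n (int q - int r)) (oe n r)))
      = (\<Sum>r\<in>{0..q}. \<Sum>p\<in>WL n (q - r) \<times> SL n r. ?g (r, p))"
  proof (rule sum.cong)
    fix r assume "r \<in> {0..q}"
    then have "int q - int r = int (q - r)" by simp
    then have e1: "oh n (int q - int r) = (sum (\<lambda>xs. oprod n (rev xs)) (WL n (q - r)) :: 'k opol)"
      by (metis oh_WL)
    have "oscale ((-1) ^ r) (omul n (oh n (int q - int r)) (oe n r))
       = oscale ((-1) ^ r) (\<Sum>xs\<in>WL n (q - r). \<Sum>ys\<in>SL n r. omul n (oprod n (rev xs)) (oprod n ys) :: 'k opol)"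
      unfolding e1 oe_SL omul_sum_left by (simp only: omul_sum_right)
    also have "\<dots> = (\<Sum>xs\<in>WL n (q - r). \<Sum>ys\<in>SL n r. ?g (r, xs, ys))"
      by (simp only: oscale_sum oprod_concat prod.case)
    also have "\<dots> = (\<Sum>p\<in>WL n (q - r) \<times> SL n r. ?g (r, p))"
      by (rule sum.cartesian_product'[unfolded split_def, symmetric])
    finally show "oscale ((-1) ^ r) (omul n (oh n (int q - int r)) (oe n r)) = (\<Sum>p\<in>WL n (q - r) \<times> SL n r. ?g (r, p))" .
  qed simp
  also have "\<dots> = (\<Sum>(r, p)\<in>S2 n q. ?g (r, p))"
    unfolding S2_def by (rule sum.Sigma) (auto simp: finite_SL finite_WL)
  also have "\<dots> = sum ?g (S2 n q)" by (simp only: case_prod_eta)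
  also have "\<dots> = 0"
  proof (rule cancel_inv[OF two finite_S2, where \<iota> = iota2])
    fix x assume x: "x \<in> S2 n q"
    obtain r xs ys where xe: "x = (r, xs, ys)" by (cases x) auto
    have P: "iota2 (r, xs, ys) \<in> S2 n q \<and> iota2 (iota2 (r, xs, ys)) = (r, xs, ys)
     \<and> (case iota2 (r, xs, ys) of (r', xs', ys') \<Rightarrow> rev xs' @ ys' = rev xs @ ys \<and> (r' = r + 1 \<or> r' + 1 = r))"
      using iota2_props[OF q, of r xs ys n] x xe by simp
    then show "iota2 x \<in> S2 n q" "iota2 (iota2 x) = x" using xe by auto
    obtain r' xs' ys' where ie: "iota2 (r, xs, ys) = (r', xs', ys')" by (cases "iota2 (r, xs, ys)") auto
    have w: "rev xs' @ ys' = rev xs @ ys" and rr: "r' = r + 1 \<or> r' + 1 = r" using P ie by auto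
    have s: "(-1::'k) ^ r' = - ((-1) ^ r)"
      using rr by (auto simp: power_add)
    show "?g (iota2 x) = - ?g x" using xe ie w s by (simp add: oscale_neg)
  qed
  finally show ?thesis .
qed

definition iota1 :: "nat \<times> nat list \<times> nat list \<Rightarrow> nat \<times> nat list \<times> nat list" where
  "iota1 x = (case x of (t, ys, xs) \<Rightarrow>
     if ys \<noteq> [] \<and> (xs = [] \<or> last xs \<le> last ys) then (t - 1, butlast ys, xs @ [last ys])
     else (t + 1, ys @ [last xs], butlast xs))"

definition S1 :: "nat \<Rightarrow> nat \<Rightarrow> (nat \<times> nat list \<times> nat list) set" where
  "S1 n m = Sigma {0..m} (\<lambda>t. SL n t \<times> WL n (m - t))"

lemma S1_mem: "(t, ys, xs) \<in> S1 n m \<longleftrightarrow> t \<le> m \<and> sorted xs \<and> set xs \<subseteq> {1..n} \<and> length xs = m - t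
   \<and> sorted_wrt (<) ys \<and> set ys \<subseteq> {1..n} \<and> length ys = t"
  by (auto simp: S1_def WL_def SL_def)

lemma iota1_props:
  assumes q: "m \<ge> 1" and mm: "(t, ys, xs) \<in> S1 n m"
  shows "iota1 (t, ys, xs) \<in> S1 n m \<and> iota1 (iota1 (t, ys, xs)) = (t, ys, xs)
     \<and> (case iota1 (t, ys, xs) of (t', ys', xs') \<Rightarrow> ys' @ rev xs' = ys @ rev xs \<and> (t' = t + 1 \<or> t' + 1 = t))"
proof (cases "ys \<noteq> [] \<and> (xs = [] \<or> last xs \<le> last ys)")
  case True
  then obtain y ys' where ys: "ys = ys' @ [y]" by (cases ys rule: rev_cases) auto
  have A: "iota1 (t, ys, xs) = (t - 1, ys', xs @ [y])" using True ys by (simp add: iota1_def)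
  have t1: "t \<ge> 1" using mm ys by (simp add: S1_mem)
  have mem: "(t - 1, ys', xs @ [y]) \<in> S1 n m"
  proof -
    have "\<forall>z\<in>set xs. z \<le> y"
    proof (cases xs rule: rev_cases)
      case (snoc xs'' x)
      then have "x \<le> y" using True ys by simp
      moreover have "sorted xs" using mm by (simp add: S1_mem)
      ultimately show ?thesis using snoc by (auto simp: sorted_append)
    qed simp
    then show ?thesis using mm ys t1 by (auto simp: S1_mem sorted_append sorted_wrt_append)
  qed
  have notA: "\<not> (ys' \<noteq> [] \<and> (xs @ [y] = [] \<or> last (xs @ [y]) \<le> last ys'))"
  proof
    assume h: "ys' \<noteq> [] \<and> (xs @ [y] = [] \<or> last (xs @ [y]) \<le> last ys')"
    have "sorted_wrt (<) (ys' @ [y])" using mm ys by (simp add: S1_mem)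
    then have "last ys' < y" using h by (cases ys' rule: rev_cases) (auto simp: sorted_wrt_append)
    with h show False by simp
  qed
  have B: "iota1 (t - 1, ys', xs @ [y]) = (t, ys, xs)"
    using t1 notA ys by (simp add: iota1_def)
  show ?thesis using A B mem ys t1 by auto
next
  case False
  have xsne: "xs \<noteq> []"
  proof
    assume "xs = []"
    then have "ys = []" using False by simp
    then show False using mm q \<open>xs = []\<close> by (simp add: S1_mem)
  qed
  then obtain x xs' where xs: "xs = xs' @ [x]" by (cases xs rule: rev_cases) auto
  have A: "iota1 (t, ys, xs) = (t + 1, ys @ [x], xs')" using False xs by (simp add: iota1_def)
  have lt: "ys = [] \<or> last ys < x" using False xs by auto
  have mem: "(t + 1, ys @ [x], xs') \<in> S1 n m"
  proof -
    have "\<forall>z\<in>set ys. z < x"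
    proof (cases ys rule: rev_cases)
      case (snoc ys'' y)
      then have "y < x" using lt by simp
      moreover have "sorted_wrt (<) ys" using mm by (simp add: S1_mem)
      ultimately show ?thesis using snoc by (auto simp: sorted_wrt_append)
    qed simp
    then show ?thesis using mm xs by (auto simp: S1_mem sorted_append sorted_wrt_append)
  qed
  have B: "iota1 (t + 1, ys @ [x], xs') = (t, ys, xs)"
  proof -
    have "sorted (xs' @ [x])" using mm xs by (simp add: S1_mem)
    then have "xs' = [] \<or> last xs' \<le> x" by (cases xs' rule: rev_cases) (auto simp: sorted_append)
    then show ?thesis using xs by (simp add: iota1_def)
  qed
  show ?thesis using A B mem xs by auto
qed

lemma finite_S1: "finite (S1 n q)"
  by (simp add: S1_def finite_SL finite_WL)

lemma ident1:
  assumes two: "(2::'k::field) \<noteq> 0" and q: "m \<ge> 1"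
  shows "(\<Sum>t\<in>{0..m}. oscale ((-1) ^ t) (omul n (oe n t) (oh n (int m - int t)))) = (0 :: 'k opol)"
proof -
  let ?g = "\<lambda>x. case x of (t, ys, xs) \<Rightarrow> oscale ((-1) ^ t) (oprod n (ys @ rev xs) :: 'k opol)"
  have "(\<Sum>t\<in>{0..m}. oscale ((-1) ^ t) (omul n (oe n t) (oh n (int m - int t))))
      = (\<Sum>t\<in>{0..m}. \<Sum>p\<in>SL n t \<times> WL n (m - t). ?g (t, p))"
  proof (rule sum.cong)
    fix t assume "t \<in> {0..m}"
    then have "int m - int t = int (m - t)" by simp
    then have e1: "oh n (int m - int t) = (sum (\<lambda>xs. oprod n (rev xs)) (WL n (m - t)) :: 'k opol)"
      by (metis oh_WL)
    have "oscale ((-1) ^ t) (omul n (oe n t) (oh n (int m - int t)))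
       = oscale ((-1) ^ t) (\<Sum>ys\<in>SL n t. \<Sum>xs\<in>WL n (m - t). omul n (oprod n ys) (oprod n (rev xs)) :: 'k opol)"
      unfolding e1 oe_SL omul_sum_left by (simp only: omul_sum_right)
    also have "\<dots> = (\<Sum>ys\<in>SL n t. \<Sum>xs\<in>WL n (m - t). ?g (t, ys, xs))"
      by (simp only: oscale_sum oprod_concat prod.case)
    also have "\<dots> = (\<Sum>p\<in>SL n t \<times> WL n (m - t). ?g (t, p))"
      by (rule sum.cartesian_product'[unfolded split_def, symmetric])
    finally show "oscale ((-1) ^ t) (omul n (oe n t) (oh n (int m - int t))) = (\<Sum>p\<in>SL n t \<times> WL n (m - t). ?g (t, p))" .
  qed simp
  also have "\<dots> = (\<Sum>(t, p)\<in>S1 n m. ?g (t, p))"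
    unfolding S1_def by (rule sum.Sigma) (auto simp: finite_SL finite_WL)
  also have "\<dots> = sum ?g (S1 n m)" by (simp only: case_prod_eta)
  also have "\<dots> = 0"
  proof (rule cancel_inv[OF two finite_S1, where \<iota> = iota1])
    fix x assume x: "x \<in> S1 n m"
    obtain t ys xs where xe: "x = (t, ys, xs)" by (cases x) auto
    have P: "iota1 (t, ys, xs) \<in> S1 n m \<and> iota1 (iota1 (t, ys, xs)) = (t, ys, xs)
     \<and> (case iota1 (t, ys, xs) of (t', ys', xs') \<Rightarrow> ys' @ rev xs' = ys @ rev xs \<and> (t' = t + 1 \<or> t' + 1 = t))"
      using iota1_props[OF q, of t ys xs n] x xe by simp
    then show "iota1 x \<in> S1 n m" "iota1 (iota1 x) = x" using xe by auto
    obtain t' ys' xs' where ie: "iota1 (t, ys, xs) = (t', ys', xs')" by (cases "iota1 (t, ys, xs)") auto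
    have w: "ys' @ rev xs' = ys @ rev xs" and rr: "t' = t + 1 \<or> t' + 1 = t" using P ie by auto
    have s: "(-1::'k) ^ t' = - ((-1) ^ t)"
      using rr by (auto simp: power_add)
    show "?g (iota1 x) = - ?g x" using xe ie w s by (simp add: oscale_neg)
  qed
  finally show ?thesis .
qed

lemma oh_rep: "oh n s = (sum (\<lambda>xs. oprod n (rev xs)) (if s < 0 then {} else WL n (nat s)) :: 'k::field opol)"
proof (cases "s < 0")
  case True then show ?thesis by (simp add: oh_neg)
next
  case False
  then have "s = int (nat s)" by simp
  then show ?thesis using False by (metis oh_WL)
qed

definition AS :: "nat \<Rightarrow> 'k::field opol \<Rightarrow> bool" where
  "AS n h \<longleftrightarrow> (\<forall>u v. omul n (omul n (oprod n u) (oprod n v)) h = omul n (oprod n u) (omul n (oprod n v) h))"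

lemma AS_sum: "AS n (sum (\<lambda>c. oprod n (hh c)) C :: 'k::field opol)"
  unfolding AS_def
  by (simp only: omul_sum_right oprod_concat append_assoc) simp

lemma assoc2:
  assumes "AS n h"
  shows "omul n (omul n (oprod n u) (sum (\<lambda>b. oprod n (gg b)) B)) h = omul n (oprod n u) (omul n (sum (\<lambda>b. oprod n (gg b)) B) h)"
proof -
  have "omul n (omul n (oprod n u) (sum (\<lambda>b. oprod n (gg b)) B)) h = (\<Sum>b\<in>B. omul n (omul n (oprod n u) (oprod n (gg b))) h)"
    by (simp only: omul_sum_right omul_sum_left)
  also have "\<dots> = (\<Sum>b\<in>B. omul n (oprod n u) (omul n (oprod n (gg b)) h))"
    using assms by (simp add: AS_def)
  also have "\<dots> = omul n (oprod n u) (omul n (sum (\<lambda>b. oprod n (gg b)) B) h)"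
    by (simp only: omul_sum_right omul_sum_left)
  finally show ?thesis .
qed

lemma assoc3:
  assumes "AS n h"
  shows "omul n (omul n (sum (\<lambda>a. oprod n (ff a)) A) (sum (\<lambda>b. oprod n (gg b)) B)) h = omul n (sum (\<lambda>a. oprod n (ff a)) A) (omul n (sum (\<lambda>b. oprod n (gg b)) B) h)"
proof -
  let ?g = "sum (\<lambda>b. oprod n (gg b)) B"
  have "omul n (omul n (sum (\<lambda>a. oprod n (ff a)) A) ?g) h = (\<Sum>a\<in>A. omul n (omul n (oprod n (ff a)) ?g) h)"
    by (simp only: omul_sum_left)
  also have "\<dots> = (\<Sum>a\<in>A. omul n (oprod n (ff a)) (omul n ?g h))"
    by (rule sum.cong[OF refl]) (rule assoc2[OF assms])
  also have "\<dots> = omul n (sum (\<lambda>a. oprod n (ff a)) A) (omul n ?g h)"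
    by (simp only: omul_sum_left)
  finally show ?thesis .
qed

lemma oe_rep: "oe n r = (sum (\<lambda>ys. oprod n ys) (SL n r) :: 'k::field opol)"
  by (simp add: oe_SL)

lemma assoc_EHE: "omul n (omul n (oe n t) (oh n s)) (oe n r) = (omul n (oe n t) (omul n (oh n s) (oe n r)) :: 'k::field opol)"
  unfolding oh_rep[of n s] oe_rep[of n t] oe_rep[of n r]
  by (rule assoc3[OF AS_sum])

definition Dp :: "nat \<Rightarrow> nat \<Rightarrow> int \<Rightarrow> 'k::field opol" where
  "Dp n i m = (\<Sum>t\<in>{0..n - i}. oscale ((-1) ^ t) (omul n (oe n t) (oh n (m - int t))))"

lemma oc_Dp: assumes "i \<le> n" shows "oc n i j k = (Dp n i (int k + int j - int i) :: 'k::field opol)"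
proof -
  define M where "M = int k + int j - int i"
  define f where "f = (\<lambda>t::int. oscale ((-1) ^ nat t) (omul n (oe n (nat t)) (oh n (M - t))) :: 'k opol)"
  have "oc n i j k = sum f {0..min M (int n - int i)}"
    by (simp add: oc_def osum_eq f_def M_def)
  also have "\<dots> = sum f {0..int n - int i}"
  proof (rule sum.mono_neutral_left)
    show "\<forall>t\<in>{0..int n - int i} - {0..min M (int n - int i)}. f t = 0"
    proof
      fix t assume "t \<in> {0..int n - int i} - {0..min M (int n - int i)}"
      then have "M - t < 0" by auto
      then show "f t = 0" by (simp add: f_def oh_neg omul_zero_right oscale_zero)
    qed
  qed auto
  also have "{0..int n - int i} = int ` {0..n - i}" using assms by (simp add: image_int_atLeastAtMost of_nat_diff)
  also have "sum f (int ` {0..n - i}) = sum (f \<circ> int) {0..n - i}" by (rule sum.reindex) simp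
  also have "\<dots> = Dp n i M" unfolding Dp_def by (rule sum.cong) (auto simp: f_def)
  finally show ?thesis by (simp add: M_def)
qed

lemma Dp_short:
  assumes "m \<le> n - i"
  shows "Dp n i (int m) = (\<Sum>t\<in>{0..m}. oscale ((-1) ^ t) (omul n (oe n t) (oh n (int m - int t))) :: 'k::field opol)"
  unfolding Dp_def
proof (rule sum.mono_neutral_right)
  show "\<forall>t\<in>{0..n - i} - {0..m}. oscale ((-1) ^ t) (omul n (oe n t) (oh n (int m - int t))) = (0::'k opol)"
    by (auto simp: oh_neg omul_zero_right oscale_zero)
qed (use assms in auto)

lemma oc_below: assumes "int k < int i - int j" shows "oc n i j k = ozero"
proof -
  have "{0..min (int k + int j - int i) (int n - int i)} = {}" using assms by auto
  then show ?thesis by (simp add: oc_def osum_def ozero_def)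
qed

lemma oc_diag: assumes "int k = int i - int j" "i \<le> n" shows "(oc n i j k :: 'k::field opol) = oone"
proof -
  have z: "int k + int j - int i = 0" using assms by simp
  have "{0..min (int k + int j - int i) (int n - int i)} = {0}" using assms by auto
  then have "oc n i j k = (oscale 1 (omul n (oe n 0) (oh n 0)) :: 'k opol)"
    by (simp add: oc_def osum_eq z)
  also have "\<dots> = oone"
  proof -
    have o: "ofin (oone :: 'k opol)" by (auto simp: ofin_def oone_def fs_def)
    show ?thesis by (simp only: oscale_one oe_0 oh_0 omul_oone_left[OF o])
  qed
  finally show ?thesis .
qed

lemma inner:
  assumes two: "(2::'k::field) \<noteq> 0" and q: "q \<ge> 1" and n: "n \<ge> 1"
  shows "(\<Sum>l\<in>{1..n}. oscale ((-1) ^ (n - l)) (omul n (oh n (int q - int (n + 1 - l))) (oe n (n + 1 - l)))) = (oh n (int q) :: 'k opol)"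
proof -
  define T where "T = (\<lambda>r. oscale ((-1) ^ r) (omul n (oh n (int q - int r)) (oe n r)) :: 'k opol)"
  have z1: "sum T {0..n} = sum T {0..max n q}"
    by (rule sum.mono_neutral_left) (auto simp: T_def oe_big omul_zero_right oscale_zero)
  have z2: "sum T {0..q} = sum T {0..max n q}"
    by (rule sum.mono_neutral_left) (auto simp: T_def oh_neg omul_zero_left oscale_zero)
  have z: "sum T {0..n} = 0" using z1 z2 ident2[OF two q, of n] by (simp add: T_def)
  have sp: "sum T {0..n} = T 0 + sum T {1..n}" using sum.atLeast_Suc_atMost[of 0 n T] by simp
  have T0: "T 0 = oh n (int q)" by (simp add: T_def oscale_one oe_0 omul_oone_right ofin_oh)
  define g where "g = (\<lambda>r. oscale ((-1) ^ (r - 1)) (omul n (oh n (int q - int r)) (oe n r)) :: 'k opol)"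
  have "(\<Sum>l\<in>{1..n}. oscale ((-1) ^ (n - l)) (omul n (oh n (int q - int (n + 1 - l))) (oe n (n + 1 - l))))
      = (\<Sum>l\<in>{1..n}. g (n + 1 - l))"
    by (rule sum.cong) (auto simp: g_def)
  also have "\<dots> = sum g {1..n}" using sum.atLeastAtMost_rev[of g 1 n] by simp
  also have "\<dots> = sum (\<lambda>r. - T r) {1..n}"
  proof (rule sum.cong)
    fix r assume "r \<in> {1..n}"
    then obtain s where s: "r = Suc s" by (cases r) auto
    show "g r = - T r" by (simp add: g_def T_def s oscale_neg[symmetric])
  qed simp
  also have "\<dots> = - sum T {1..n}" by (simp add: sum_negf)
  also have "\<dots> = T 0" using z sp by (metis add.commute neg_eq_iff_add_eq_0)
  finally show ?thesis using T0 by simp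
qed

lemma ofin_oc: "ofin (oc n i j k :: 'k::field opol)"
  unfolding oc_def osum_eq by (intro ofin_sum ofin_oscale ofin_omul)

lemma oc_shift: "oc n i (Suc j) k = oc n i j (Suc k)"
proof -
  have e: "int k + int (Suc j) - int i = int (Suc k) + int j - int i" by simp
  show ?thesis unfolding oc_def by (simp only: e)
qed

lemma Dp_mul: "omul n (Dp n i m) (oscale c (oe n r)) =
   (\<Sum>t\<in>{0..n - i}. oscale (c * (-1) ^ t) (omul n (oe n t) (omul n (oh n (m - int t)) (oe n r))) :: 'k::field opol)"
  unfolding Dp_def
  by (simp add: omul_sum_left omul_scale_left omul_scale_right assoc_EHE oscale_sum oscale_oscale mult_ac)

theorem mainTheorem11:
  fixes n :: nat
  assumes "n \<ge> 1" and "(2::'k::field) \<noteq> 0"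
  shows "\<forall>i j k. 1 \<le> i \<and> i \<le> n \<and> 1 \<le> j \<and> j \<le> n \<longrightarrow>
           omatpow n (ocomp n :: 'k omat) k i j = oc n i j k \<and>
           (int k < int i - int j \<longrightarrow> (oc n i j k :: 'k opol) = ozero) \<and>
           (int k = int i - int j \<longrightarrow> (oc n i j k :: 'k opol) = oone)"
proof -
  note n1 = assms(1) and two = assms(2)
  have main: "\<forall>i j. 1 \<le> i \<and> i \<le> n \<and> 1 \<le> j \<and> j \<le> n \<longrightarrow> omatpow n (ocomp n :: 'k omat) k i j = oc n i j k" for k
  proof (induction k)
    case 0
    show ?case
    proof (intro allI impI)
      fix i j assume ij: "1 \<le> i \<and> i \<le> n \<and> 1 \<le> j \<and> j \<le> n"
      show "omatpow n (ocomp n :: 'k omat) 0 i j = oc n i j 0"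
      proof (cases "j < i")
        case True
        have "oc n i j 0 = (ozero :: 'k opol)" by (rule oc_below) (use True in simp)
        then show ?thesis using True by (simp add: omatid_def)
      next
        case False
        show ?thesis
        proof (cases "j = i")
          case True
          have "oc n i j 0 = (oone :: 'k opol)" by (rule oc_diag) (use True ij in auto)
          then show ?thesis using True by (simp add: omatid_def)
        next
          case False
          with \<open>\<not> j < i\<close> have ji: "j > i" by simp
          have "oc n i j 0 = (Dp n i (int (j - i)) :: 'k opol)"
            using oc_Dp[of i n j 0] ij ji by (simp add: of_nat_diff)
          also have "\<dots> = (\<Sum>t\<in>{0..j - i}. oscale ((-1) ^ t) (omul n (oe n t) (oh n (int (j - i) - int t))))"
            by (rule Dp_short) (use ij in linarith)
          also have "\<dots> = 0" by (rule ident1[OF two]) (use ji in simp)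
          finally show ?thesis using ji by (simp add: omatid_def ozero_eq)
        qed
      qed
    qed
  next
    case (Suc k)
    show ?case
    proof (intro allI impI)
      fix i j assume ij: "1 \<le> i \<and> i \<le> n \<and> 1 \<le> j \<and> j \<le> n"
      have pw: "omatpow n (ocomp n :: 'k omat) (Suc k) i j = (\<Sum>l\<in>{1..n}. omul n (omatpow n (ocomp n) k i l) (ocomp n l j))"
        by (simp add: omatmul_def osum_eq)
      show "omatpow n (ocomp n :: 'k omat) (Suc k) i j = oc n i j (Suc k)"
      proof (cases "j < n")
        case True
        have "(\<Sum>l\<in>{1..n}. omul n (omatpow n (ocomp n :: 'k omat) k i l) (ocomp n l j))
            = (\<Sum>l\<in>{1..n}. if l = Suc j then omul n (omatpow n (ocomp n) k i (Suc j)) oone else 0)"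
        proof (rule sum.cong)
          fix l assume l: "l \<in> {1..n}"
          show "omul n (omatpow n (ocomp n :: 'k omat) k i l) (ocomp n l j) = (if l = Suc j then omul n (omatpow n (ocomp n) k i (Suc j)) oone else 0)"
          proof (cases "l = Suc j")
            case True
            then have "ocomp n l j = (oone :: 'k opol)" using \<open>j < n\<close> ij by (simp add: ocomp_def)
            then show ?thesis using True by simp
          next
            case False
            then have "ocomp n l j = (ozero :: 'k opol)" using \<open>j < n\<close> ij l by (auto simp: ocomp_def)
            then show ?thesis using False by (simp add: ozero_eq omul_zero_right)
          qed
        qed simp
        also have "\<dots> = omul n (omatpow n (ocomp n) k i (Suc j)) oone" using True ij by simp
        also have "\<dots> = omul n (oc n i (Suc j) k) oone" using Suc.IH ij True by simp
        also have "\<dots> = oc n i (Suc j) k" by (rule omul_oone_right[OF ofin_oc])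
        finally show ?thesis using pw oc_shift by simp
      next
        case False
        then have jn: "j = n" using ij by simp
        define X where "X = (\<lambda>t l. oscale ((-1) ^ (n - l) * (-1) ^ t) (omul n (oe n t) (omul n (oh n (int k + int l - int i - int t)) (oe n (n + 1 - l)))) :: 'k opol)"
        have A: "omatpow n (ocomp n :: 'k omat) (Suc k) i j = (\<Sum>l\<in>{1..n}. \<Sum>t\<in>{0..n - i}. X t l)"
          unfolding pw
        proof (rule sum.cong)
          fix l assume l: "l \<in> {1..n}"
          have "omatpow n (ocomp n :: 'k omat) k i l = Dp n i (int k + int l - int i)"
            using Suc.IH ij l oc_Dp[of i n l k] by simp
          moreover have "ocomp n l j = (oscale ((-1) ^ (n - l)) (oe n (n + 1 - l)) :: 'k opol)" using jn by (simp add: ocomp_def)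
          ultimately show "omul n (omatpow n (ocomp n :: 'k omat) k i l) (ocomp n l j) = (\<Sum>t\<in>{0..n - i}. X t l)"
            by (simp add: Dp_mul X_def)
        qed simp
        also have "\<dots> = (\<Sum>t\<in>{0..n - i}. \<Sum>l\<in>{1..n}. X t l)" by (rule sum.swap)
        also have "\<dots> = Dp n i (int (Suc k) + int n - int i)"
          unfolding Dp_def
        proof (rule sum.cong)
          fix t assume t: "t \<in> {0..n - i}"
          define q where "q = Suc k + n - i - t"
          have q1: "q \<ge> 1" using t ij unfolding q_def by simp linarith
          have le: "i + t \<le> Suc (k + n)" using t ij by auto
          have qe: "int (Suc k) + int n - int i - int t = int q" using le unfolding q_def by (simp add: of_nat_diff)
          have "oscale ((-1) ^ t) (omul n (oe n t) (oh n (int (Suc k) + int n - int i - int t)))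
             = oscale ((-1) ^ t) (omul n (oe n t) (\<Sum>l\<in>{1..n}. oscale ((-1) ^ (n - l)) (omul n (oh n (int q - int (n + 1 - l))) (oe n (n + 1 - l)))) :: 'k opol)"
            unfolding qe inner[OF two q1 n1] ..
          also have "\<dots> = (\<Sum>l\<in>{1..n}. oscale ((-1) ^ (n - l) * (-1) ^ t) (omul n (oe n t) (omul n (oh n (int q - int (n + 1 - l))) (oe n (n + 1 - l)))))"
            by (simp add: omul_sum_right omul_scale_right oscale_sum oscale_oscale mult_ac)
          also have "\<dots> = (\<Sum>l\<in>{1..n}. X t l)"
          proof (rule sum.cong)
            fix l assume l: "l \<in> {1..n}"
            have "int q - int (n + 1 - l) = int k + int l - int i - int t" using l qe[symmetric] by (simp add: of_nat_diff)
            then show "oscale ((-1) ^ (n - l) * (-1) ^ t) (omul n (oe n t) (omul n (oh n (int q - int (n + 1 - l))) (oe n (n + 1 - l)))) = X t l"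
              by (simp add: X_def)
          qed simp
          finally show "(\<Sum>l\<in>{1..n}. X t l) = oscale ((-1) ^ t) (omul n (oe n t) (oh n (int (Suc k) + int n - int i - int t)))" by simp
        qed simp
        also have "\<dots> = oc n i j (Suc k)" using oc_Dp[of i n j "Suc k", where 'k='k] ij jn by simp
        finally show ?thesis .
      qed
    qed
  qed
  show ?thesis
  proof (intro allI impI conjI)
    fix i j k assume ij: "1 \<le> i \<and> i \<le> n \<and> 1 \<le> j \<and> j \<le> n"
    show "omatpow n (ocomp n :: 'k omat) k i j = oc n i j k" using main ij by blast
    show "int k < int i - int j \<Longrightarrow> (oc n i j k :: 'k opol) = ozero" by (rule oc_below)
    show "int k = int i - int j \<Longrightarrow> (oc n i j k :: 'k opol) = oone" using ij by (intro oc_diag) auto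
  qed
qed

end
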